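(* Let $(\mathbf X_1,\mathbf Y_1)$ and $(\mathbf X_2,\mathbf Y_2)$ be general correlated sources, both uniformly integrable, with identical marginals $\mathbf X_1=\mathbf X_2$ (i.e. $P_{X_1^n}=P_{X_2^n}$ for all $n$), and let $(\mathbf X,\mathbf Y)$ be their mixture $P_{X^nY^n}=\alpha_1P_{X_1^nY_1^n}+\alpha_2P_{X_2^nY_2^n}$ with $\alpha_1,\alpha_2>0$, $\alpha_1+\alpha_2=1$. If $\overline H_s(\mathbf X_i|\mathbf Y_i)=\overline H(\mathbf X_i|\mathbf Y_i)$ for $i=1,2$, then \[\overline H_s(\mathbf X|\mathbf Y)=\max_{i=1,2}\overline H_s(\mathbf X_i|\mathbf Y_i)=\max_{i=1,2}\overline H(\mathbf X_i|\mathbf Y_i).\]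
   Context: A general correlated source $\{(X^n,Y^n)\}_{n\ge1}$ is an arbitrary sequence of pairs of random variables on $\mathcal X^n\times\mathcal Y^n$, $\mathcal X,\mathcal Y$ finite or countably infinite (no structural assumptions; marginal probabilities positive). Logs base 2. A source is uniformly integrable if $Z_n=\frac1n\log\frac1{P_{X^n|Y^n}(X^n|Y^n)}$ satisfies $\lim_{u\to\infty}\sup_n\sum_{z:|z|\ge u}P_{Z_n}(z)|z|=0$. $\overline H(\mathbf X|\mathbf Y)=\inf\{\alpha:\lim_n\Pr\{Z_n>\alpha\}=0\}$. For a source with distributions $P_{X^nY^n}$, $x^n$ and $\varepsilon\in(0,1]$: $\overline h^\varepsilon(x^n)=\inf\{a\in\mathbb R:\sum_{y^n:\log(1/P_{X^n|Y^n}(x^n|y^n))>a}P_{Y^n|X^n}(y^n|x^n)\le\varepsilon\}$; $\overline H_s^\varepsilon(X^n|Y^n)=\sum_{x^n}P_{X^n}(x^n)\overline h^\varepsilon(x^n)$; $\overline H_s(\mathbf X|\mathbf Y)=\lim_{\varepsilon\downarrow0}\limsup_n\frac1n\overline H_s^\varepsilon(X^n|Y^n)$; these are applied to the mixture and to each component. *)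

theory Defs
  imports "HOL-Probability.Probability"
begin

text \<open>A general correlated source: for each block length n a joint pmf on pairs
  (x^n, y^n), with x^n, y^n represented as lists (of length n) over countable alphabets.\<close>

type_synonym ('a, 'b) source = "nat \<Rightarrow> ('a list \<times> 'b list) pmf"

definition src_wf :: "('a, 'b) source \<Rightarrow> bool" where
  "src_wf P \<longleftrightarrow> (\<forall>n. set_pmf (P n) \<subseteq> {(x, y). length x = n \<and> length y = n})"

definition PX :: "('a, 'b) source \<Rightarrow> nat \<Rightarrow> 'a list \<Rightarrow> real" where
  "PX P n x = pmf (map_pmf fst (P n)) x"

definition PY :: "('a, 'b) source \<Rightarrow> nat \<Rightarrow> 'b list \<Rightarrow> real" where
  "PY P n y = pmf (map_pmf snd (P n)) y"

definition PXgY :: "('a, 'b) source \<Rightarrow> nat \<Rightarrow> 'a list \<Rightarrow> 'b list \<Rightarrow> real" where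
  "PXgY P n x y = pmf (P n) (x, y) / PY P n y"

definition PYgX :: "('a, 'b) source \<Rightarrow> nat \<Rightarrow> 'b list \<Rightarrow> 'a list \<Rightarrow> real" where
  "PYgX P n y x = pmf (P n) (x, y) / PX P n x"

definition Zn :: "('a, 'b) source \<Rightarrow> nat \<Rightarrow> 'a list \<times> 'b list \<Rightarrow> real" where
  "Zn P n xy = (1 / real n) * log 2 (1 / PXgY P n (fst xy) (snd xy))"

definition unif_integrable :: "('a, 'b) source \<Rightarrow> bool" where
  "unif_integrable P \<longleftrightarrow>
     ((\<lambda>u::real. \<Squnion>n\<in>{1..}. \<integral>\<^sup>+ xy. ennreal (\<bar>Zn P n xy\<bar>) * indicator {xy. \<bar>Zn P n xy\<bar> \<ge> u} xy
        \<partial>measure_pmf (P n)) \<longlongrightarrow> 0) at_top"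

definition Hbar :: "('a, 'b) source \<Rightarrow> ennreal" where
  "Hbar P = Inf (ennreal ` {\<alpha>::real.
      ((\<lambda>n. measure_pmf.prob (P n) {xy. Zn P n xy > \<alpha>}) \<longlongrightarrow> 0) sequentially})"

definition hbar_eps :: "('a, 'b) source \<Rightarrow> nat \<Rightarrow> real \<Rightarrow> 'a list \<Rightarrow> real" where
  "hbar_eps P n \<epsilon> x = Inf {a::real.
      (\<integral>\<^sup>+ y. ennreal (PYgX P n y x) * indicator {y. log 2 (1 / PXgY P n x y) > a} y
         \<partial>count_space UNIV) \<le> ennreal \<epsilon>}"

definition Hs_eps :: "('a, 'b) source \<Rightarrow> nat \<Rightarrow> real \<Rightarrow> ennreal" where
  "Hs_eps P n \<epsilon> = (\<integral>\<^sup>+ x. ennreal (hbar_eps P n \<epsilon> x) \<partial>measure_pmf (map_pmf fst (P n)))"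

definition Hs :: "('a, 'b) source \<Rightarrow> ennreal" where
  "Hs P = Lim (at_right (0::real))
     (\<lambda>\<epsilon>. limsup (\<lambda>n. ennreal (1 / real n) * Hs_eps P n \<epsilon>))"

end

theory Submission
  imports Defs
begin


lemma mix_bind:
  fixes M M1 M2 :: "'c pmf" and a b :: real
  assumes "a > 0" "b > 0" "a + b = 1" "\<forall>z. pmf M z = a * pmf M1 z + b * pmf M2 z"
  shows "M = bind_pmf (bernoulli_pmf a) (\<lambda>c. if c then M1 else M2)"
proof (rule pmf_eqI)
  fix z
  have "b = 1 - a" using assms by simp
  then show "pmf M z = pmf (bind_pmf (bernoulli_pmf a) (\<lambda>c. if c then M1 else M2)) z"
    using assms by (simp add: pmf_bind)
qed

lemma mix_nn:
  fixes M M1 M2 :: "'c pmf" and a b :: real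
  assumes "a > 0" "b > 0" "a + b = 1" "\<forall>z. pmf M z = a * pmf M1 z + b * pmf M2 z"
  shows "(\<integral>\<^sup>+z. f z \<partial>M) = ennreal a * (\<integral>\<^sup>+z. f z \<partial>M1) + ennreal b * (\<integral>\<^sup>+z. f z \<partial>M2)"
proof -
  have b: "b = 1 - a" using assms by simp
  have "(\<integral>\<^sup>+z. f z \<partial>M) = (\<integral>\<^sup>+z. f z \<partial>bind_pmf (bernoulli_pmf a) (\<lambda>c. if c then M1 else M2))"
    by (subst mix_bind[OF assms]) (rule refl)
  also have "\<dots> = (\<integral>\<^sup>+z. f z \<partial>M1) * ennreal a + (\<integral>\<^sup>+z. f z \<partial>M2) * ennreal (1 - a)"
    using assms by simp
  finally show ?thesis unfolding b by (simp add: mult.commute)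
qed

lemma mix_map:
  fixes M M1 M2 :: "'c pmf" and a b :: real
  assumes "a > 0" "b > 0" "a + b = 1" "\<forall>z. pmf M z = a * pmf M1 z + b * pmf M2 z"
  shows "pmf (map_pmf f M) w = a * pmf (map_pmf f M1) w + b * pmf (map_pmf f M2) w"
proof -
  have "b = 1 - a" using assms by simp
  then show ?thesis
    apply (subst mix_bind[OF assms])
    using assms by (simp add: map_bind_pmf pmf_bind)
qed

lemma mix_measure:
  fixes M M1 M2 :: "'c pmf" and a b :: real
  assumes "a > 0" "b > 0" "a + b = 1" "\<forall>z. pmf M z = a * pmf M1 z + b * pmf M2 z"
  shows "measure M A = a * measure M1 A + b * measure M2 A"
proof -
  have "emeasure M A = ennreal a * emeasure M1 A + ennreal b * emeasure M2 A"
    using mix_nn[OF assms, of "indicator A"] by simp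
  then have "ennreal (measure M A) = ennreal (a * measure M1 A) + ennreal (b * measure M2 A)"
    using assms by (simp add: measure_pmf.emeasure_eq_measure ennreal_mult)
  also have "\<dots> = ennreal (a * measure M1 A + b * measure M2 A)"
    using assms by (intro ennreal_plus[symmetric]) auto
  finally show ?thesis using assms
    by (subst (asm) ennreal_inj) auto
qed

lemma slice:
  fixes M :: "('a \<times> 'b) pmf"
  shows "(\<integral>\<^sup>+y. ennreal (pmf M (x,y)) * f y \<partial>count_space UNIV)
       = (\<integral>\<^sup>+z. indicator {z. fst z = x} z * f (snd z) \<partial>measure_pmf M)"
proof -
  have "(\<integral>\<^sup>+z. indicator {z. fst z = x} z * f (snd z) \<partial>measure_pmf M)
     = (\<integral>\<^sup>+z. ennreal (pmf M z) * f (snd z) * indicator (range (Pair x)) z \<partial>count_space UNIV)"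
    unfolding nn_integral_measure_pmf
    by (intro nn_integral_cong) (auto split: split_indicator simp: image_iff)
  also have "\<dots> = (\<integral>\<^sup>+z. ennreal (pmf M z) * f (snd z) \<partial>count_space (range (Pair x)))"
    by (simp add: nn_integral_count_space_indicator)
  also have "\<dots> = (\<integral>\<^sup>+y. ennreal (pmf M (x,y)) * f y \<partial>count_space UNIV)"
    by (subst nn_integral_bij_count_space[symmetric, of "Pair x" UNIV]) (auto simp: bij_betw_def inj_on_def)
  finally show ?thesis ..
qed



definition LL :: "('a, 'b) source \<Rightarrow> nat \<Rightarrow> 'a list \<times> 'b list \<Rightarrow> real" where
  "LL P n z = log 2 (1 / PXgY P n (fst z) (snd z))"

definition TT :: "('a, 'b) source \<Rightarrow> nat \<Rightarrow> 'a list \<Rightarrow> real \<Rightarrow> real" where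
  "TT P n x a = measure (P n) {z. fst z = x \<and> LL P n z > a} / PX P n x"

lemma marg_slice:
  fixes M :: "('a \<times> 'b) pmf"
  shows "(\<integral>\<^sup>+y. ennreal (pmf M (x,y)) \<partial>count_space UNIV) = ennreal (pmf (map_pmf fst M) x)"
proof -
  have "(\<integral>\<^sup>+y. ennreal (pmf M (x,y)) \<partial>count_space UNIV) = (\<integral>\<^sup>+y. ennreal (pmf M (x,y)) * 1 \<partial>count_space UNIV)"
    by simp
  also have "\<dots> = (\<integral>\<^sup>+z. indicator {z. fst z = x} z * 1 \<partial>measure_pmf M)"
    by (rule slice)
  also have "\<dots> = emeasure M {z. fst z = x}" by simp
  also have "\<dots> = ennreal (measure M (fst -` {x}))"
    by (simp add: measure_pmf.emeasure_eq_measure vimage_def)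
  finally show ?thesis by (simp add: pmf_map)
qed

lemma measure_fst_eq: "measure (measure_pmf M) {z. fst z = x} = pmf (map_pmf fst M) x"
  by (simp add: pmf_map vimage_def)

lemma pmf_le_PX: "pmf (P n) (x,y) \<le> PX P n x"
proof -
  have "pmf (P n) (x,y) = measure (P n) {(x,y)}" by (simp add: measure_pmf_single)
  also have "\<dots> \<le> measure (P n) (fst -` {x})"
    by (intro measure_pmf.finite_measure_mono) auto
  finally show ?thesis by (simp add: PX_def pmf_map)
qed

lemma pmf_le_PY: "pmf (P n) (x,y) \<le> PY P n y"
proof -
  have "pmf (P n) (x,y) = measure (P n) {(x,y)}" by (simp add: measure_pmf_single)
  also have "\<dots> \<le> measure (P n) (snd -` {y})"
    by (intro measure_pmf.finite_measure_mono) auto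
  finally show ?thesis by (simp add: PY_def pmf_map)
qed

lemma PXgY_ge0: "0 \<le> PXgY P n x y"
  by (simp add: PXgY_def PY_def)

lemma PXgY_le1: "PXgY P n x y \<le> 1"
proof (cases "PY P n y = 0")
  case True then show ?thesis by (simp add: PXgY_def)
next
  case False
  then have "PY P n y > 0" by (simp add: PY_def order_less_le)
  then show ?thesis using pmf_le_PY[of P n x y] by (simp add: PXgY_def divide_le_eq_1)
qed

lemma log_inv_nonneg: "0 \<le> p \<Longrightarrow> p \<le> 1 \<Longrightarrow> 0 \<le> log 2 (1 / p)"
  by (cases "p = 0") (auto simp: log_def)

lemma LL_nonneg: "0 \<le> LL P n z"
  unfolding LL_def by (rule log_inv_nonneg[OF PXgY_ge0 PXgY_le1])

lemma double:
  fixes M :: "('a::countable \<times> 'b::countable) pmf"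
  shows "(\<integral>\<^sup>+x. \<integral>\<^sup>+y. ennreal (pmf M (x,y)) * f x y \<partial>count_space UNIV \<partial>count_space UNIV)
       = (\<integral>\<^sup>+z. f (fst z) (snd z) \<partial>M)"
proof -
  have "(\<integral>\<^sup>+x. \<integral>\<^sup>+y. ennreal (pmf M (x,y)) * f x y \<partial>count_space UNIV \<partial>count_space UNIV)
      = (\<integral>\<^sup>+x. \<integral>\<^sup>+z. indicator {z. fst z = x} z * f x (snd z) \<partial>measure_pmf M \<partial>count_space UNIV)"
    by (intro nn_integral_cong slice)
  also have "\<dots> = (\<integral>\<^sup>+x. \<integral>\<^sup>+z. ennreal (pmf M z) * (indicator {z. fst z = x} z * f x (snd z)) \<partial>count_space UNIV \<partial>count_space UNIV)"
    by (simp add: nn_integral_measure_pmf)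
  also have "\<dots> = (\<integral>\<^sup>+z. \<integral>\<^sup>+x. ennreal (pmf M z) * (indicator {z. fst z = x} z * f x (snd z)) \<partial>count_space UNIV \<partial>count_space UNIV)"
    by (rule nn_integral_count_space_nn_integral[symmetric]) auto
  also have "\<dots> = (\<integral>\<^sup>+z. ennreal (pmf M z) * f (fst z) (snd z) \<partial>count_space UNIV)"
  proof (intro nn_integral_cong)
    fix z :: "'a \<times> 'b"
    have "(\<integral>\<^sup>+x. ennreal (pmf M z) * (indicator {z. fst z = x} z * f x (snd z)) \<partial>count_space UNIV)
        = (\<integral>\<^sup>+x. ennreal (pmf M z) * f x (snd z) * indicator {fst z} x \<partial>count_space UNIV)"
      by (intro nn_integral_cong) (auto split: split_indicator)
    also have "\<dots> = ennreal (pmf M z) * f (fst z) (snd z)" by simp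
    finally show "(\<integral>\<^sup>+x. ennreal (pmf M z) * (indicator {z. fst z = x} z * f x (snd z)) \<partial>count_space UNIV)
        = ennreal (pmf M z) * f (fst z) (snd z)" .
  qed
  also have "\<dots> = (\<integral>\<^sup>+z. f (fst z) (snd z) \<partial>M)"
    by (simp add: nn_integral_measure_pmf)
  finally show ?thesis .
qed

lemma tail_eq:
  "(\<integral>\<^sup>+y. ennreal (PYgX P n y x) * indicator {y. log 2 (1 / PXgY P n x y) > a} y \<partial>count_space UNIV)
   = ennreal (TT P n x a)"
proof (cases "PX P n x = 0")
  case True
  then show ?thesis by (simp add: PYgX_def TT_def)
next
  case False
  then have q: "PX P n x > 0" by (simp add: PX_def order_less_le)
  have "(\<integral>\<^sup>+y. ennreal (PYgX P n y x) * indicator {y. log 2 (1 / PXgY P n x y) > a} y \<partial>count_space UNIV)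
     = (\<integral>\<^sup>+y. ennreal (1 / PX P n x) * (ennreal (pmf (P n) (x,y)) * indicator {y. log 2 (1 / PXgY P n x y) > a} y) \<partial>count_space UNIV)"
    using q by (intro nn_integral_cong) (simp add: PYgX_def ennreal_mult' mult.commute mult.left_commute divide_inverse mult.assoc)
  also have "\<dots> = ennreal (1 / PX P n x) * (\<integral>\<^sup>+y. ennreal (pmf (P n) (x,y)) * indicator {y. log 2 (1 / PXgY P n x y) > a} y \<partial>count_space UNIV)"
    by (rule nn_integral_cmult) auto
  also have "(\<integral>\<^sup>+y. ennreal (pmf (P n) (x,y)) * indicator {y. log 2 (1 / PXgY P n x y) > a} y \<partial>count_space UNIV)
     = (\<integral>\<^sup>+z. indicator {z. fst z = x} z * indicator {y. log 2 (1 / PXgY P n x y) > a} (snd z) \<partial>measure_pmf (P n))"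
    by (rule slice)
  also have "\<dots> = (\<integral>\<^sup>+z. indicator {z. fst z = x \<and> LL P n z > a} z \<partial>measure_pmf (P n))"
    by (intro nn_integral_cong) (auto simp: LL_def split: split_indicator)
  also have "\<dots> = ennreal (measure (P n) {z. fst z = x \<and> LL P n z > a})"
    by (simp add: measure_pmf.emeasure_eq_measure)
  finally show ?thesis using q
    by (simp add: TT_def ennreal_mult'[symmetric] divide_inverse mult.commute)
qed

lemma hbar_eps_TT: "0 \<le> e \<Longrightarrow> hbar_eps P n e x = Inf {a. TT P n x a \<le> e}"
  unfolding hbar_eps_def tail_eq
  by (subst ennreal_le_iff) auto

lemma TT_nonneg: "0 \<le> TT P n x a"
  by (simp add: TT_def PX_def)

lemma TT_neg: assumes "PX P n x > 0" "a < 0" shows "TT P n x a = 1"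
proof -
  have "{z. fst z = x \<and> LL P n z > a} = {z. fst z = x}"
  proof (intro Collect_cong iffI conjI)
    fix z :: "'a list \<times> 'b list" assume "fst z = x"
    show "a < LL P n z" using LL_nonneg[of P n z] assms(2) by linarith
  qed auto
  then show ?thesis using assms(1) by (simp add: TT_def measure_fst_eq PX_def)
qed

lemma TT_mono: "a \<le> b \<Longrightarrow> TT P n x b \<le> TT P n x a"
  unfolding TT_def
  by (intro divide_right_mono measure_pmf.finite_measure_mono) (auto simp: PX_def)

lemma TT_small: assumes "PX P n x > 0" "e > 0" shows "\<exists>a. TT P n x a \<le> e"
proof -
  define A where "A m = {z. fst z = x \<and> LL P n z > real m}" for m :: nat
  have "(\<lambda>m. measure (P n) (A m)) \<longlonglongrightarrow> measure (P n) (\<Inter>m. A m)"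
    by (rule measure_pmf.finite_Lim_measure_decseq) (auto simp: decseq_def A_def)
  moreover have "(\<Inter>m. A m) = {}"
  proof -
    { fix z assume z: "z \<in> (\<Inter>m. A m)"
      obtain m :: nat where m: "LL P n z < real m" using reals_Archimedean2 by blast
      from z have "z \<in> A m" by blast
      then have "LL P n z > real m" by (simp add: A_def)
      with m have False by simp }
    then show ?thesis by auto
  qed
  ultimately have "(\<lambda>m. measure (P n) (A m)) \<longlonglongrightarrow> 0" by simp
  moreover have "e * PX P n x > 0" using assms by simp
  ultimately have "eventually (\<lambda>m. measure (P n) (A m) < e * PX P n x) sequentially"
    by (rule order_tendstoD(2))
  then obtain m where "measure (P n) (A m) < e * PX P n x"
    by (auto simp: eventually_sequentially)
  then have "TT P n x (real m) \<le> e" using assms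
    by (simp add: TT_def A_def pos_divide_le_eq)
  then show ?thesis by blast
qed

lemma S_bdd: assumes "PX P n x > 0" "e < 1" "TT P n x a \<le> e" shows "0 \<le> a"
  using TT_neg[OF assms(1), of a] assms by force

lemma hbar_le: assumes "PX P n x > 0" "0 \<le> e" "e < 1" "TT P n x a \<le> e"
  shows "hbar_eps P n e x \<le> a"
  unfolding hbar_eps_TT[OF assms(2)]
  by (rule cInf_lower) (use assms S_bdd[OF assms(1,3)] in \<open>auto intro!: bdd_belowI[of _ 0]\<close>)

lemma hbar_ge: assumes "PX P n x > 0" "0 < e" "\<And>a. TT P n x a \<le> e \<Longrightarrow> c \<le> a"
  shows "c \<le> hbar_eps P n e x"
  unfolding hbar_eps_TT[OF order_less_imp_le[OF assms(2)]]
  by (rule cInf_greatest) (use assms TT_small[OF assms(1,2)] in auto)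

lemma hbar_nonneg: assumes "PX P n x > 0" "0 < e" "e < 1" shows "0 \<le> hbar_eps P n e x"
  by (rule hbar_ge[OF assms(1,2)]) (rule S_bdd[OF assms(1,3)])

lemma hbar_anti: assumes "PX P n x > 0" "0 < e1" "e1 \<le> e2" "e2 < 1"
  shows "hbar_eps P n e2 x \<le> hbar_eps P n e1 x"
  by (rule hbar_ge) (use assms in \<open>auto intro!: hbar_le\<close>)



lemma PX_pos_of_set: "x \<in> set_pmf (map_pmf fst (P n)) \<Longrightarrow> PX P n x > 0"
  by (simp add: PX_def pmf_positive)

lemma Hs_eps_anti: assumes "0 < e1" "e1 \<le> e2" "e2 < 1"
  shows "Hs_eps P n e2 \<le> Hs_eps P n e1"
  unfolding Hs_eps_def
  by (intro nn_integral_mono_AE AE_pmfI ennreal_leI hbar_anti PX_pos_of_set) (use assms in auto)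

definition FF :: "('a, 'b) source \<Rightarrow> real \<Rightarrow> ennreal" where
  "FF P e = limsup (\<lambda>n. ennreal (1 / real n) * Hs_eps P n e)"

lemma FF_anti: assumes "0 < e1" "e1 \<le> e2" "e2 < 1" shows "FF P e2 \<le> FF P e1"
  unfolding FF_def
  by (intro Limsup_mono always_eventually allI mult_left_mono Hs_eps_anti assms) auto

lemma Lim_SUP:
  fixes F :: "real \<Rightarrow> ennreal"
  assumes anti: "\<And>e1 e2. 0 < e1 \<Longrightarrow> e1 \<le> e2 \<Longrightarrow> e2 < 1 \<Longrightarrow> F e2 \<le> F e1"
  shows "Lim (at_right 0) F = (SUP e\<in>{0<..<1}. F e)"
proof (rule tendsto_Lim)
  show "at_right (0::real) \<noteq> bot" by simp
  show "(F \<longlongrightarrow> (SUP e\<in>{0<..<1}. F e)) (at_right 0)"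
  proof (rule increasing_tendsto)
    show "\<forall>\<^sub>F e in at_right 0. F e \<le> (SUP e\<in>{0<..<1}. F e)"
      unfolding eventually_at_right[OF zero_less_one]
      by (intro exI[of _ 1]) (auto intro: SUP_upper)
    fix x assume "x < (SUP e\<in>{0<..<1}. F e)"
    then obtain e0 where e0: "e0 \<in> {0<..<1}" "x < F e0" by (auto simp: less_SUP_iff)
    show "\<forall>\<^sub>F e in at_right 0. x < F e"
      unfolding eventually_at_right[OF zero_less_one]
    proof (intro exI[of _ e0] conjI allI impI)
      fix e :: real assume "0 < e" "e < e0"
      then have "F e0 \<le> F e" using e0 by (intro anti) auto
      then show "x < F e" using e0 by simp
    qed (use e0 in auto)
  qed
qed

lemma Hs_SUP: "Hs P = (SUP e\<in>{0<..<1}. FF P e)"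
  unfolding Hs_def FF_def[symmetric]
  by (rule Lim_SUP) (rule FF_anti)



locale mixsrc =
  fixes P1 P2 P :: "('a::countable, 'b::countable) source" and a1 a2 :: real
  assumes marg: "\<forall>n. map_pmf fst (P1 n) = map_pmf fst (P2 n)"
    and a1: "a1 > 0" and a2: "a2 > 0" and a12: "a1 + a2 = 1"
    and mix: "\<forall>n xy. pmf (P n) xy = a1 * pmf (P1 n) xy + a2 * pmf (P2 n) xy"
begin

lemma mixn: "\<forall>z. pmf (P n) z = a1 * pmf (P1 n) z + a2 * pmf (P2 n) z"
  using mix by simp

lemma PX_eq1: "PX P n x = PX P1 n x"
  using mix_map[OF a1 a2 a12 mixn, where f=fst and w=x] marg a12
  by (simp add: PX_def) (metis distrib_right mult_1)

lemma PX_eq2: "PX P n x = PX P2 n x"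
  using PX_eq1[of n x] marg by (simp add: PX_def)

lemma mapfst_eq1: "map_pmf fst (P n) = map_pmf fst (P1 n)"
  by (rule pmf_eqI) (use PX_eq1 in \<open>simp add: PX_def\<close>)

lemma PY_mix: "PY P n y = a1 * PY P1 n y + a2 * PY P2 n y"
  unfolding PY_def by (rule mix_map[OF a1 a2 a12 mixn])

lemma measure_mix: "measure (P n) A = a1 * measure (P1 n) A + a2 * measure (P2 n) A"
  by (rule mix_measure[OF a1 a2 a12 mixn])

lemma LL_lower:
  assumes K: "K \<ge> 1" and z: "pmf (P2 n) z < K * pmf (P1 n) z"
  shows "LL P1 n z - log 2 ((a1 + a2 * K) / a1) \<le> LL P n z"
proof -
  obtain x y where zxy: "z = (x, y)" by force
  define p1 where "p1 = pmf (P1 n) z"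
  define p2 where "p2 = pmf (P2 n) z"
  define C where "C = (a1 + a2 * K) / a1"
  have p2: "0 \<le> p2" by (simp add: p2_def)
  have "0 < K * p1" using z p2 unfolding p1_def p2_def by linarith
  then have p1: "0 < p1" using K by (simp add: zero_less_mult_iff)
  have y1: "PY P1 n y \<ge> p1" using pmf_le_PY[of P1 n x y] by (simp add: p1_def zxy)
  have y1p: "PY P1 n y > 0" using y1 p1 by linarith
  have y2: "PY P2 n y \<ge> 0" by (simp add: PY_def)
  have yp: "PY P n y \<ge> a1 * PY P1 n y" using PY_mix[of n y] y2 a2 by simp
  have "a1 * PY P1 n y > 0" using y1p a1 by simp
  then have ypos: "PY P n y > 0" using yp by linarith
  have pz: "pmf (P n) z = a1 * p1 + a2 * p2" unfolding p1_def p2_def by (rule spec[OF mixn])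
  have pz_le: "pmf (P n) z \<le> (a1 + a2 * K) * p1"
    using pz z a2 unfolding p1_def p2_def by (simp add: algebra_simps)
  have "a1 * p1 > 0" "a2 * p2 \<ge> 0" using a1 a2 p1 p2 by simp_all
  then have pz_pos: "pmf (P n) z > 0" using pz by linarith
  have g: "PXgY P n x y = pmf (P n) z / PY P n y" by (simp add: PXgY_def zxy)
  have g1: "PXgY P1 n x y = p1 / PY P1 n y" by (simp add: PXgY_def zxy p1_def)
  have gpos: "PXgY P n x y > 0" using g pz_pos ypos by simp
  have g1pos: "PXgY P1 n x y > 0" using g1 p1 y1p by simp
  have "a2 * K > 0" using a2 K by simp
  then have Cpos: "C > 0" using a1 unfolding C_def by (intro divide_pos_pos) linarith+
  have "PXgY P n x y \<le> (a1 + a2 * K) * p1 / (a1 * PY P1 n y)"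
    unfolding g
  proof (rule frac_le)
    show "0 \<le> (a1 + a2 * K) * p1" using a1 a2 K p1 by simp
  qed (use pz_le yp a1 y1p in auto)
  also have "\<dots> = C * PXgY P1 n x y" using a1 by (simp add: g1 C_def field_simps)
  finally have le: "PXgY P n x y \<le> C * PXgY P1 n x y" .
  have "LL P1 n z - log 2 C = log 2 (1 / (C * PXgY P1 n x y))"
    unfolding LL_def zxy using Cpos g1pos
    by (simp add: log_divide log_mult)
  also have "\<dots> \<le> log 2 (1 / PXgY P n x y)"
    using le gpos Cpos g1pos by (intro log_le_cancel_iff[THEN iffD2]) (auto intro!: divide_left_mono)
  finally show ?thesis by (simp add: LL_def zxy C_def)
qed

end


context mixsrc begin

lemma bad_bound:
  assumes K: "K \<ge> 1"
  shows "K * measure (P1 n) {z. fst z = x \<and> \<not> pmf (P2 n) z < K * pmf (P1 n) z} \<le> PX P n x"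
proof -
  define B where "B = {z. fst z = x \<and> \<not> pmf (P2 n) z < K * pmf (P1 n) z}"
  have "ennreal K * emeasure (P1 n) B = (\<integral>\<^sup>+z. ennreal K * ennreal (pmf (P1 n) z) \<partial>count_space B)"
    by (simp add: nn_integral_pmf[symmetric] nn_integral_cmult)
  also have "\<dots> \<le> (\<integral>\<^sup>+z. ennreal (pmf (P2 n) z) \<partial>count_space B)"
    using K by (intro nn_integral_mono) (auto simp: B_def ennreal_mult'[symmetric] intro!: ennreal_leI)
  also have "\<dots> = emeasure (P2 n) B" by (simp add: nn_integral_pmf)
  finally have "ennreal (K * measure (P1 n) B) \<le> ennreal (measure (P2 n) B)"
    using K by (simp add: measure_pmf.emeasure_eq_measure ennreal_mult)
  then have "K * measure (P1 n) B \<le> measure (P2 n) B" by (simp add: ennreal_le_iff)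
  also have "\<dots> \<le> measure (P2 n) {z. fst z = x}"
    by (intro measure_pmf.finite_measure_mono) (auto simp: B_def)
  also have "\<dots> = PX P n x" using PX_eq2[of n x] by (simp add: measure_fst_eq PX_def)
  finally show ?thesis by (simp add: B_def)
qed

lemma lower_pt:
  assumes q: "PX P n x > 0" and e: "0 < e" and K: "K \<ge> 1" and e1: "e / a1 + 1 / K < 1"
  shows "hbar_eps P1 n (e / a1 + 1 / K) x - log 2 ((a1 + a2 * K) / a1) \<le> hbar_eps P n e x"
proof (rule hbar_ge[OF q e])
  define c where "c = log 2 ((a1 + a2 * K) / a1)"
  fix a assume Ta: "TT P n x a \<le> e"
  define q0 where "q0 = PX P n x"
  define B where "B = {z. fst z = x \<and> \<not> pmf (P2 n) z < K * pmf (P1 n) z}"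
  have q1: "PX P1 n x > 0" using q PX_eq1 by simp
  have Bb: "K * measure (P1 n) B \<le> q0" unfolding B_def q0_def by (rule bad_bound[OF K])
  have "{z. fst z = x \<and> LL P1 n z > a + c} \<subseteq> {z. fst z = x \<and> LL P n z > a} \<union> B"
  proof
    fix z assume z: "z \<in> {z. fst z = x \<and> LL P1 n z > a + c}"
    show "z \<in> {z. fst z = x \<and> LL P n z > a} \<union> B"
    proof (cases "pmf (P2 n) z < K * pmf (P1 n) z")
      case True
      from LL_lower[OF K True] z show ?thesis by (auto simp: c_def)
    next
      case False with z show ?thesis by (auto simp: B_def)
    qed
  qed
  then have "measure (P1 n) {z. fst z = x \<and> LL P1 n z > a + c}
      \<le> measure (P1 n) ({z. fst z = x \<and> LL P n z > a} \<union> B)"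
    by (intro measure_pmf.finite_measure_mono) auto
  also have "\<dots> \<le> measure (P1 n) {z. fst z = x \<and> LL P n z > a} + measure (P1 n) B"
    by (rule measure_Un_le) auto
  finally have m1: "measure (P1 n) {z. fst z = x \<and> LL P1 n z > a + c}
      \<le> measure (P1 n) {z. fst z = x \<and> LL P n z > a} + measure (P1 n) B" .
  have mm: "measure (P n) {z. fst z = x \<and> LL P n z > a} \<ge> a1 * measure (P1 n) {z. fst z = x \<and> LL P n z > a}"
    using measure_mix[of n "{z. fst z = x \<and> LL P n z > a}"] a2 by simp
  have mle: "measure (P n) {z. fst z = x \<and> LL P n z > a} \<le> e * q0"
    using Ta q by (simp add: TT_def q0_def pos_divide_le_eq)
  have "a1 * measure (P1 n) {z. fst z = x \<and> LL P1 n z > a + c} \<le> e * q0 + a1 * (q0 / K)"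
  proof -
    have "a1 * measure (P1 n) {z. fst z = x \<and> LL P1 n z > a + c}
        \<le> a1 * measure (P1 n) {z. fst z = x \<and> LL P n z > a} + a1 * measure (P1 n) B"
      using mult_left_mono[OF m1, of a1] a1 by (simp add: distrib_left)
    moreover have "measure (P1 n) B \<le> q0 / K" using Bb K by (simp add: pos_le_divide_eq mult.commute)
    then have "a1 * measure (P1 n) B \<le> a1 * (q0 / K)" using a1 by (intro mult_left_mono) auto
    ultimately show ?thesis using mm mle by linarith
  qed
  also have "e * q0 + a1 * (q0 / K) = a1 * (q0 * (e / a1 + 1 / K))"
    using a1 by (simp add: field_simps)
  finally have "measure (P1 n) {z. fst z = x \<and> LL P1 n z > a + c} \<le> q0 * (e / a1 + 1 / K)"
    using a1 by simp
  then have "TT P1 n x (a + c) \<le> e / a1 + 1 / K"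
    using q unfolding TT_def PX_eq1[symmetric] q0_def[symmetric]
    by (simp add: pos_divide_le_eq q0_def mult.commute)
  then have "hbar_eps P1 n (e / a1 + 1 / K) x \<le> a + c"
    using q1 e1 e a1 K by (intro hbar_le) (auto intro!: add_nonneg_nonneg)
  then show "hbar_eps P1 n (e / a1 + 1 / K) x - log 2 ((a1 + a2 * K) / a1) \<le> a"
    by (simp add: c_def)
qed

end


context mixsrc begin

lemma Hs_eps_lower:
  assumes e: "0 < e" and K: "K \<ge> 1" and e1: "e / a1 + 1 / K < 1"
  shows "Hs_eps P1 n (e / a1 + 1 / K) \<le> Hs_eps P n e + ennreal (log 2 ((a1 + a2 * K) / a1))"
proof -
  define c where "c = log 2 ((a1 + a2 * K) / a1)"
  have "a2 * K \<ge> 0" using a2 K by simp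
  then have "(a1 + a2 * K) / a1 \<ge> 1" using a1 by simp
  then have c: "c \<ge> 0" unfolding c_def by simp
  have "a1 \<le> 1" using a12 a2 by simp
  then have "e \<le> e / a1" using e a1 by (simp add: le_divide_eq)
  moreover have "1 / K > 0" using K by simp
  ultimately have e1': "e < 1" using e1 by linarith
  have "Hs_eps P1 n (e / a1 + 1 / K) = (\<integral>\<^sup>+x. ennreal (hbar_eps P1 n (e / a1 + 1 / K) x) \<partial>map_pmf fst (P n))"
    by (simp add: Hs_eps_def mapfst_eq1)
  also have "\<dots> \<le> (\<integral>\<^sup>+x. ennreal (hbar_eps P n e x) + ennreal c \<partial>map_pmf fst (P n))"
  proof (intro nn_integral_mono_AE AE_pmfI)
    fix x assume "x \<in> set_pmf (map_pmf fst (P n))"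
    then have q: "PX P n x > 0" by (rule PX_pos_of_set)
    have "hbar_eps P1 n (e / a1 + 1 / K) x \<le> hbar_eps P n e x + c"
      using lower_pt[OF q e K e1] by (simp add: c_def)
    then have "ennreal (hbar_eps P1 n (e / a1 + 1 / K) x) \<le> ennreal (hbar_eps P n e x + c)"
      by (rule ennreal_leI)
    also have "\<dots> = ennreal (hbar_eps P n e x) + ennreal c"
      using hbar_nonneg[OF q e e1'] c by (simp add: ennreal_plus)
    finally show "ennreal (hbar_eps P1 n (e / a1 + 1 / K) x) \<le> ennreal (hbar_eps P n e x) + ennreal c" .
  qed
  also have "\<dots> = Hs_eps P n e + ennreal c"
    by (simp add: nn_integral_add Hs_eps_def measure_pmf.emeasure_space_1)
  finally show ?thesis by (simp add: c_def)
qed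

lemma FF_lower:
  assumes e: "0 < e" and K: "K \<ge> 1" and e1: "e / a1 + 1 / K < 1"
  shows "FF P1 (e / a1 + 1 / K) \<le> FF P e"
proof (rule ennreal_le_epsilon)
  fix d :: real assume d: "0 < d"
  define c where "c = log 2 ((a1 + a2 * K) / a1)"
  have "FF P1 (e / a1 + 1 / K) \<le> limsup (\<lambda>n. ennreal d + ennreal (1 / real n) * Hs_eps P n e)"
    unfolding FF_def
  proof (intro Limsup_mono eventually_sequentiallyI)
    fix n :: nat assume n: "n \<ge> nat \<lceil>c / d\<rceil> + 1"
    then have npos: "real n > 0" by simp
    have "c / d \<le> real n" using n by linarith
    then have cn: "c / real n \<le> d" using d npos by (simp add: divide_le_eq mult.commute)
    have "ennreal (1 / real n) * Hs_eps P1 n (e / a1 + 1 / K)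
        \<le> ennreal (1 / real n) * (Hs_eps P n e + ennreal c)"
      by (intro mult_left_mono Hs_eps_lower[OF e K e1, unfolded c_def[symmetric]]) auto
    also have "\<dots> = ennreal (1 / real n) * Hs_eps P n e + ennreal (c / real n)"
    proof -
      have "ennreal (1 / real n) * ennreal c = ennreal (c / real n)"
        using npos by (subst ennreal_mult'[symmetric]) auto
      then show ?thesis by (simp add: distrib_left)
    qed
    also have "\<dots> \<le> ennreal (1 / real n) * Hs_eps P n e + ennreal d"
      using cn by (intro add_left_mono ennreal_leI)
    finally show "ennreal (1 / real n) * Hs_eps P1 n (e / a1 + 1 / K)
        \<le> ennreal d + ennreal (1 / real n) * Hs_eps P n e" by (simp add: add.commute)
  qed
  also have "\<dots> = ennreal d + FF P e"
    unfolding FF_def by (rule Limsup_const_add) simp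
  finally show "FF P1 (e / a1 + 1 / K) \<le> FF P e + ennreal d" by (simp add: add.commute)
qed

lemma Hs_lower: "Hs P1 \<le> Hs P"
  unfolding Hs_SUP
proof (rule SUP_least)
  fix e' :: real assume e': "e' \<in> {0<..<1}"
  define e where "e = a1 * e' / 2"
  define K where "K = 2 / e'"
  have K: "K \<ge> 1" using e' by (simp add: K_def)
  have ee: "e / a1 + 1 / K = e'" using a1 e' by (simp add: e_def K_def)
  have e: "0 < e" using a1 e' by (simp add: e_def)
  have "a1 \<le> 1" using a12 a2 by simp
  then have "a1 * e' \<le> e'" using e' a1 by (intro mult_left_le_one_le) auto
  then have ae: "a1 * e' \<le> e'" .
  have "e < 1" using e' ae unfolding e_def by (auto simp only: greaterThanLessThan_iff)
  have "FF P1 e' \<le> FF P e" using FF_lower[OF e K] ee e' by simp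
  also have "\<dots> \<le> (SUP e\<in>{0<..<1}. FF P e)" using e \<open>e < 1\<close> by (intro SUP_upper) auto
  finally show "FF P1 e' \<le> (SUP e\<in>{0<..<1}. FF P e)" .
qed

end


lemma Zn_LL: "Zn P n z = LL P n z / real n"
  by (simp add: Zn_def LL_def)

lemma upper_pt:
  assumes q: "PX P n x > 0" and e: "0 < e" "e < 1" and a: "a > 0"
  shows "ennreal (hbar_eps P n e x) \<le> ennreal a + ennreal (1 / e) *
    (\<integral>\<^sup>+y. ennreal (PYgX P n y x) * (ennreal (LL P n (x,y)) * indicator {y. LL P n (x,y) > a} y) \<partial>count_space UNIV)"
    (is "_ \<le> _ + _ * ?G")
proof (cases ?G)
  case (real g)
  define b where "b = a + g / e"
  have b: "b > 0" using a real e by (simp add: b_def add_pos_nonneg)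
  have "ennreal (TT P n x b)
      = (\<integral>\<^sup>+y. ennreal (PYgX P n y x) * indicator {y. log 2 (1 / PXgY P n x y) > b} y \<partial>count_space UNIV)"
    by (rule tail_eq[symmetric])
  also have "\<dots> \<le> (\<integral>\<^sup>+y. ennreal (1 / b) * (ennreal (PYgX P n y x) * (ennreal (LL P n (x,y)) * indicator {y. LL P n (x,y) > a} y)) \<partial>count_space UNIV)"
  proof (intro nn_integral_mono)
    fix y
    show "ennreal (PYgX P n y x) * indicator {y. log 2 (1 / PXgY P n x y) > b} y
        \<le> ennreal (1 / b) * (ennreal (PYgX P n y x) * (ennreal (LL P n (x,y)) * indicator {y. LL P n (x,y) > a} y))"
    proof (cases "LL P n (x,y) > b")
      case True
      then have "LL P n (x,y) > a" using b_def real e by (smt (verit) divide_nonneg_pos)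
      have "1 \<le> LL P n (x,y) / b" using True b by simp
      then have "ennreal 1 \<le> ennreal (1 / b) * ennreal (LL P n (x,y))"
        using b by (simp add: ennreal_mult'[symmetric] ennreal_leI)
      then have "ennreal (PYgX P n y x) * 1 \<le> ennreal (PYgX P n y x) * (ennreal (1 / b) * ennreal (LL P n (x,y)))"
        by (intro mult_left_mono) auto
      then show ?thesis using True \<open>LL P n (x,y) > a\<close>
        by (simp add: LL_def mult_ac)
    next
      case False
      then show ?thesis by (simp add: LL_def)
    qed
  qed
  also have "\<dots> = ennreal (1 / b) * ennreal g"
    by (subst nn_integral_cmult) (auto simp: real)
  also have "\<dots> = ennreal (g / b)" using b by (simp add: ennreal_mult'[symmetric])
  finally have "TT P n x b \<le> g / b"
    using b real by (simp add: ennreal_le_iff)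
  also have "g / b \<le> e" using b a e real by (simp add: divide_le_eq b_def algebra_simps)
  finally have "hbar_eps P n e x \<le> b" using q e by (intro hbar_le) auto
  then have "ennreal (hbar_eps P n e x) \<le> ennreal b" by (rule ennreal_leI)
  also have "\<dots> = ennreal a + ennreal (1 / e) * ennreal g"
    using a e real by (simp add: b_def ennreal_plus ennreal_mult'[symmetric])
  finally show ?thesis by (simp add: real)
next
  case top
  then show ?thesis using e by (simp add: ennreal_mult_top)
qed

lemma PX_PYgX: "ennreal (PX P n x) * ennreal (PYgX P n y x) = ennreal (pmf (P n) (x,y))"
proof (cases "PX P n x = 0")
  case True
  then have "pmf (P n) (x,y) = 0" using pmf_le_PX[of P n x y] by (simp add: antisym)
  then show ?thesis using True by simp
next
  case False
  then have "PX P n x > 0" by (simp add: PX_def order_less_le)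
  then show ?thesis by (simp add: PYgX_def ennreal_mult'[symmetric] PX_def)
qed

lemma Hs_eps_upper:
  fixes P :: "('a::countable, 'b::countable) source"
  assumes e: "0 < e" "e < 1" and a: "a > 0"
  shows "Hs_eps P n e \<le> ennreal a + ennreal (1 / e) *
    (\<integral>\<^sup>+z. ennreal (LL P n z) * indicator {z. LL P n z > a} z \<partial>P n)"
proof -
  define G where "G x = (\<integral>\<^sup>+y. ennreal (PYgX P n y x) * (ennreal (LL P n (x,y)) * indicator {y. LL P n (x,y) > a} y) \<partial>count_space UNIV)" for x
  have "Hs_eps P n e \<le> (\<integral>\<^sup>+x. ennreal a + ennreal (1 / e) * G x \<partial>map_pmf fst (P n))"
    unfolding Hs_eps_def G_def
    by (intro nn_integral_mono_AE AE_pmfI upper_pt PX_pos_of_set) (use e a in auto)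
  also have "\<dots> = ennreal a + ennreal (1 / e) * (\<integral>\<^sup>+x. G x \<partial>map_pmf fst (P n))"
    by (simp add: nn_integral_add nn_integral_cmult measure_pmf.emeasure_space_1)
  also have "(\<integral>\<^sup>+x. G x \<partial>map_pmf fst (P n)) = (\<integral>\<^sup>+x. ennreal (PX P n x) * G x \<partial>count_space UNIV)"
    unfolding PX_def by (rule nn_integral_measure_pmf)
  also have "\<dots> = (\<integral>\<^sup>+x. \<integral>\<^sup>+y. ennreal (pmf (P n) (x,y)) * (ennreal (LL P n (x,y)) * indicator {y. LL P n (x,y) > a} y) \<partial>count_space UNIV \<partial>count_space UNIV)"
  proof (intro nn_integral_cong)
    fix x
    show "ennreal (PX P n x) * G x = (\<integral>\<^sup>+y. ennreal (pmf (P n) (x,y)) * (ennreal (LL P n (x,y)) * indicator {y. LL P n (x,y) > a} y) \<partial>count_space UNIV)"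
      unfolding G_def
      by (subst nn_integral_cmult[symmetric]) (auto simp: mult.assoc[symmetric] PX_PYgX)
  qed
  also have "\<dots> = (\<integral>\<^sup>+z. ennreal (LL P n z) * indicator {z. LL P n z > a} z \<partial>P n)"
    by (subst double) (auto intro!: nn_integral_cong split: split_indicator)
  finally show ?thesis by simp
qed

lemma Hs_eps_upper_scaled:
  fixes P :: "('a::countable, 'b::countable) source"
  assumes e: "0 < e" "e < 1" and b: "b > 0" and n: "n > 0"
  shows "ennreal (1 / real n) * Hs_eps P n e \<le> ennreal b + ennreal (1 / e) *
    (\<integral>\<^sup>+z. ennreal (Zn P n z) * indicator {z. Zn P n z > b} z \<partial>P n)"
proof -
  have "ennreal (1 / real n) * Hs_eps P n e \<le> ennreal (1 / real n) * (ennreal (real n * b) + ennreal (1 / e) *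
    (\<integral>\<^sup>+z. ennreal (LL P n z) * indicator {z. LL P n z > real n * b} z \<partial>P n))"
    using n b by (intro mult_left_mono Hs_eps_upper e) auto
  also have "\<dots> = ennreal b + ennreal (1 / e) * (ennreal (1 / real n) *
    (\<integral>\<^sup>+z. ennreal (LL P n z) * indicator {z. LL P n z > real n * b} z \<partial>P n))"
    using n b by (simp add: distrib_left ennreal_mult'[symmetric] mult_ac)
  also have "ennreal (1 / real n) * (\<integral>\<^sup>+z. ennreal (LL P n z) * indicator {z. LL P n z > real n * b} z \<partial>P n)
      = (\<integral>\<^sup>+z. ennreal (Zn P n z) * indicator {z. Zn P n z > b} z \<partial>P n)"
  proof (subst nn_integral_cmult[symmetric], simp, intro nn_integral_cong)
    fix z
    have "LL P n z > real n * b \<longleftrightarrow> Zn P n z > b" using n by (simp add: Zn_LL pos_less_divide_eq mult.commute)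
    moreover have "ennreal (1 / real n) * ennreal (LL P n z) = ennreal (Zn P n z)"
      using n by (simp add: Zn_LL ennreal_mult'[symmetric])
    ultimately show "ennreal (1 / real n) * (ennreal (LL P n z) * indicator {z. LL P n z > real n * b} z)
        = ennreal (Zn P n z) * indicator {z. Zn P n z > b} z"
      by (auto split: split_indicator simp: mult.assoc[symmetric])
  qed
  finally show ?thesis .
qed



lemma ptineq:
  fixes Zm Z1 W u g h :: real
  assumes "Z1 \<ge> 0" "W \<ge> 0" "Zm \<le> Z1 + W" "u > 0" "g > 0" "h \<ge> 0"
  shows "(if Zm > h + g then Zm else 0) \<le> (if Z1 \<ge> u then Z1 else 0) + (if Z1 > h then u else 0) + (u / g + 1) * W"
proof -
  have uw: "W > g \<Longrightarrow> u \<le> u / g * W"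
  proof -
    assume "W > g"
    then have "u / g * g \<le> u / g * W" using assms by (intro mult_left_mono) auto
    then show ?thesis using assms by simp
  qed
  obtain v where v: "v = u / g * W" by blast
  have w: "(u / g + 1) * W = v + W" by (simp add: algebra_simps v)
  have uw0: "0 \<le> v" using assms by (simp add: v)
  have uw': "W > g \<Longrightarrow> u \<le> v" using uw v by simp
  show ?thesis unfolding w using assms uw' uw0 by (auto split: if_splits)
qed

context mixsrc begin

definition WW :: "nat \<Rightarrow> 'a list \<times> 'b list \<Rightarrow> real" where
  "WW n z = log 2 (PY P n (snd z) / (a1 * PY P1 n (snd z))) / real n"

lemma Z_split:
  assumes n: "n > 0" and z: "pmf (P1 n) z > 0"
  shows "Zn P n z \<le> Zn P1 n z + WW n z" "0 \<le> WW n z"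
proof -
  obtain x y where zxy: "z = (x, y)" by force
  define p1 where "p1 = pmf (P1 n) z"
  have p1: "0 < p1" using z by (simp add: p1_def)
  have y1: "PY P1 n y \<ge> p1" using pmf_le_PY[of P1 n x y] by (simp add: p1_def zxy)
  have y1p: "PY P1 n y > 0" using y1 p1 by linarith
  have y2: "PY P2 n y \<ge> 0" by (simp add: PY_def)
  have yp: "PY P n y \<ge> a1 * PY P1 n y" using PY_mix[of n y] y2 a2 by simp
  have "a1 * PY P1 n y > 0" using y1p a1 by simp
  then have ypos: "PY P n y > 0" using yp by linarith
  have pz: "pmf (P n) z = a1 * p1 + a2 * pmf (P2 n) z" unfolding p1_def by (rule spec[OF mixn])
  have pz_ge: "pmf (P n) z \<ge> a1 * p1" using pz a2 by simp
  have "a1 * p1 > 0" using a1 p1 by simp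
  then have pz_pos: "pmf (P n) z > 0" using pz_ge by linarith
  define r where "r = a1 * PY P1 n y / PY P n y"
  have r: "r > 0" using \<open>a1 * PY P1 n y > 0\<close> ypos by (simp add: r_def)
  have g: "PXgY P n x y = pmf (P n) z / PY P n y" by (simp add: PXgY_def zxy)
  have g1: "PXgY P1 n x y = p1 / PY P1 n y" by (simp add: PXgY_def zxy p1_def)
  have g1pos: "PXgY P1 n x y > 0" using g1 p1 y1p by simp
  have "r * PXgY P1 n x y = a1 * p1 / PY P n y" using y1p by (simp add: r_def g1)
  also have "\<dots> \<le> PXgY P n x y" unfolding g using pz_ge ypos by (intro divide_right_mono) auto
  finally have le: "r * PXgY P1 n x y \<le> PXgY P n x y" .
  have rg: "r * PXgY P1 n x y > 0" using r g1pos by simp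
  have "LL P n z = log 2 (1 / PXgY P n x y)" by (simp add: LL_def zxy)
  also have "\<dots> \<le> log 2 (1 / (r * PXgY P1 n x y))"
    using le rg by (intro log_le_cancel_iff[THEN iffD2]) (auto intro!: divide_left_mono)
  also have "\<dots> = LL P1 n z + log 2 (1 / r)"
    using r g1pos by (simp add: LL_def zxy log_divide log_mult)
  also have "1 / r = PY P n (snd z) / (a1 * PY P1 n (snd z))" by (simp add: r_def zxy)
  finally have "LL P n z \<le> LL P1 n z + log 2 (PY P n (snd z) / (a1 * PY P1 n (snd z)))" .
  then show "Zn P n z \<le> Zn P1 n z + WW n z"
    using n by (simp add: Zn_LL WW_def add_divide_distrib[symmetric] divide_right_mono)
  have "1 \<le> PY P n (snd z) / (a1 * PY P1 n (snd z))"
    using yp \<open>a1 * PY P1 n y > 0\<close> by (simp add: zxy)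
  then show "0 \<le> WW n z" using n by (simp add: WW_def)
qed

lemma WW_int:
  assumes n: "n > 0"
  shows "(\<integral>\<^sup>+z. ennreal (WW n z) \<partial>P1 n) \<le> ennreal (1 / (real n * a1 * ln 2))"
proof -
  define c where "c = 1 / (real n * a1 * ln 2)"
  have c: "c > 0" using n a1 by (simp add: c_def)
  have "(\<integral>\<^sup>+z. ennreal (WW n z) \<partial>P1 n) \<le> (\<integral>\<^sup>+z. ennreal c * ennreal (PY P n (snd z) / PY P1 n (snd z)) \<partial>P1 n)"
  proof (intro nn_integral_mono_AE AE_pmfI)
    fix z assume "z \<in> set_pmf (P1 n)"
    then have z: "pmf (P1 n) z > 0" by (simp add: pmf_positive)
    obtain x y where zxy: "z = (x, y)" by force
    have "pmf (P1 n) (x,y) > 0" using z zxy by simp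
    then have y1p: "PY P1 n y > 0" using pmf_le_PY[of P1 n x y] by linarith
    have y2: "PY P2 n y \<ge> 0" by (simp add: PY_def)
    have "PY P n y \<ge> a1 * PY P1 n y" using PY_mix[of n y] y2 a2 by simp
    define t where "t = PY P n y / (a1 * PY P1 n y)"
    have "a1 * PY P1 n y > 0" using y1p a1 by simp
    then have t: "t > 0" using \<open>PY P n y \<ge> a1 * PY P1 n y\<close> unfolding t_def by simp
    have "log 2 t = ln t / ln 2" by (simp add: log_def)
    also have "\<dots> \<le> t / ln 2" using t ln_le_minus_one[of t] by (intro divide_right_mono) auto
    finally have lt: "log 2 t \<le> t / ln 2" .
    have "WW n z = log 2 t / real n" by (simp add: WW_def t_def zxy)
    also have "\<dots> \<le> t / ln 2 / real n" using lt by (rule divide_right_mono) auto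
    finally have "WW n z \<le> t / ln 2 / real n" .
    also have "\<dots> = c * (PY P n y / PY P1 n y)" using a1 by (simp add: t_def c_def field_simps)
    finally show "ennreal (WW n z) \<le> ennreal c * ennreal (PY P n (snd z) / PY P1 n (snd z))"
      using c by (simp add: zxy ennreal_mult'[symmetric] ennreal_leI)
  qed
  also have "\<dots> = ennreal c * (\<integral>\<^sup>+y. ennreal (PY P n y / PY P1 n y) \<partial>map_pmf snd (P1 n))"
    by (simp add: nn_integral_cmult)
  also have "(\<integral>\<^sup>+y. ennreal (PY P n y / PY P1 n y) \<partial>map_pmf snd (P1 n))
      = (\<integral>\<^sup>+y. ennreal (PY P1 n y) * ennreal (PY P n y / PY P1 n y) \<partial>count_space UNIV)"
    unfolding PY_def by (rule nn_integral_measure_pmf)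
  also have "\<dots> \<le> (\<integral>\<^sup>+y. ennreal (PY P n y) \<partial>count_space UNIV)"
  proof (intro nn_integral_mono)
    fix y
    show "ennreal (PY P1 n y) * ennreal (PY P n y / PY P1 n y) \<le> ennreal (PY P n y)"
    proof (cases "PY P1 n y = 0")
      case True then show ?thesis by simp
    next
      case False
      then have "PY P1 n y > 0" by (simp add: PY_def order_less_le)
      then show ?thesis by (simp add: ennreal_mult'[symmetric])
    qed
  qed
  also have "\<dots> = 1"
    unfolding PY_def by (simp add: nn_integral_pmf measure_pmf.emeasure_space_1[simplified])
  finally show ?thesis by (simp add: c_def mult_left_mono)
qed

end


context mixsrc begin

lemma comp_vanish:
  assumes ui: "unif_integrable P1"
    and hb: "(\<lambda>n. measure (P1 n) {z. Zn P1 n z > h}) \<longlonglongrightarrow> 0"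
    and h: "h \<ge> 0" and g: "g > 0" and d: "d > 0"
  shows "eventually (\<lambda>n. (\<integral>\<^sup>+z. ennreal (Zn P n z) * indicator {z. Zn P n z > h + g} z \<partial>P1 n) \<le> ennreal d) sequentially"
proof -
  define E where "E u n = (\<integral>\<^sup>+ xy. ennreal (\<bar>Zn P1 n xy\<bar>) * indicator {xy. \<bar>Zn P1 n xy\<bar> \<ge> u} xy \<partial>measure_pmf (P1 n))" for u :: real and n
  have "((\<lambda>u. \<Squnion>n\<in>{1..}. E u n) \<longlongrightarrow> 0) at_top"
    using ui unfolding unif_integrable_def E_def .
  moreover have "(0::ennreal) < ennreal (d / 3)" using d by simp
  ultimately have "eventually (\<lambda>u. (\<Squnion>n\<in>{1..}. E u n) < ennreal (d / 3)) at_top"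
    by (rule order_tendstoD(2))
  then obtain U where U: "\<And>u. u \<ge> U \<Longrightarrow> (\<Squnion>n\<in>{1..}. E u n) < ennreal (d / 3)"
    by (auto simp: eventually_at_top_linorder)
  define u where "u = max U 1"
  have u: "u > 0" by (simp add: u_def)
  have Eu: "\<And>n. n \<ge> 1 \<Longrightarrow> E u n \<le> ennreal (d / 3)"
  proof -
    fix n :: nat assume "n \<ge> 1"
    then have "E u n \<le> (\<Squnion>n\<in>{1..}. E u n)" by (intro SUP_upper) auto
    also have "\<dots> < ennreal (d / 3)" by (rule U) (simp add: u_def)
    finally show "E u n \<le> ennreal (d / 3)" by simp
  qed
  have "d / 3 / u > 0" using d u by simp
  with hb have ev1: "eventually (\<lambda>n. measure (P1 n) {z. Zn P1 n z > h} < d / 3 / u) sequentially"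
    by (rule order_tendstoD(2))
  define C where "C = (u / g + 1) / (a1 * ln 2)"
  have "(\<lambda>n. C / real n) \<longlonglongrightarrow> 0" by (rule lim_const_over_n)
  then have ev2: "eventually (\<lambda>n. C / real n < d / 3) sequentially"
    using d by (intro order_tendstoD(2)) auto
  show ?thesis
    using ev1 ev2 eventually_ge_at_top[of "1::nat"]
  proof eventually_elim
    case (elim n)
    have n: "n > 0" using elim by simp
    define W where "W = WW n"
    have "(\<integral>\<^sup>+z. ennreal (Zn P n z) * indicator {z. Zn P n z > h + g} z \<partial>P1 n)
        \<le> (\<integral>\<^sup>+z. ennreal (\<bar>Zn P1 n z\<bar>) * indicator {xy. \<bar>Zn P1 n xy\<bar> \<ge> u} z
              + ennreal u * indicator {z. Zn P1 n z > h} z + ennreal (u / g + 1) * ennreal (W z) \<partial>P1 n)"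
    proof (intro nn_integral_mono_AE AE_pmfI)
      fix z assume "z \<in> set_pmf (P1 n)"
      then have zp: "pmf (P1 n) z > 0" by (simp add: pmf_positive)
      have Z1: "Zn P1 n z \<ge> 0" using LL_nonneg[of P1 n z] by (simp add: Zn_LL)
      have W0: "W z \<ge> 0" using Z_split(2)[OF n zp] by (simp add: W_def)
      have ZW: "Zn P n z \<le> Zn P1 n z + W z" using Z_split(1)[OF n zp] by (simp add: W_def)
      have pi: "(if Zn P n z > h + g then Zn P n z else 0) \<le> (if Zn P1 n z \<ge> u then Zn P1 n z else 0)
            + (if Zn P1 n z > h then u else 0) + (u / g + 1) * W z"
        by (rule ptineq[OF Z1 W0 ZW u g h])
      have l: "ennreal (Zn P n z) * indicator {z. Zn P n z > h + g} z = ennreal (if Zn P n z > h + g then Zn P n z else 0)"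
        by (simp split: split_indicator)
      have r: "ennreal (\<bar>Zn P1 n z\<bar>) * indicator {xy. \<bar>Zn P1 n xy\<bar> \<ge> u} z
              + ennreal u * indicator {z. Zn P1 n z > h} z + ennreal (u / g + 1) * ennreal (W z)
          = ennreal ((if Zn P1 n z \<ge> u then Zn P1 n z else 0)
            + (if Zn P1 n z > h then u else 0) + (u / g + 1) * W z)"
      proof -
        have e3: "ennreal (u / g + 1) * ennreal (W z) = ennreal ((u / g + 1) * W z)"
          by (rule ennreal_mult'[symmetric]) (use u g in simp)
        have "(u / g + 1) * W z \<ge> 0" using u g W0 by simp
        then show ?thesis unfolding e3
          using Z1 W0 u g
          by (simp add: ennreal_plus split: split_indicator)
      qed
      show "ennreal (Zn P n z) * indicator {z. Zn P n z > h + g} z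
          \<le> ennreal (\<bar>Zn P1 n z\<bar>) * indicator {xy. \<bar>Zn P1 n xy\<bar> \<ge> u} z
              + ennreal u * indicator {z. Zn P1 n z > h} z + ennreal (u / g + 1) * ennreal (W z)"
        unfolding l r by (rule ennreal_leI[OF pi])
    qed
    also have "\<dots> = E u n + ennreal u * ennreal (measure (P1 n) {z. Zn P1 n z > h})
        + ennreal (u / g + 1) * (\<integral>\<^sup>+z. ennreal (W z) \<partial>P1 n)"
      by (simp add: nn_integral_add nn_integral_cmult E_def measure_pmf.emeasure_eq_measure)
    also have "\<dots> \<le> ennreal (d / 3) + ennreal (d / 3) + ennreal (d / 3)"
    proof (intro add_mono)
      show "E u n \<le> ennreal (d / 3)" using Eu elim by simp
      have "ennreal u * ennreal (measure (P1 n) {z. Zn P1 n z > h}) = ennreal (u * measure (P1 n) {z. Zn P1 n z > h})"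
        using u by (simp add: ennreal_mult'[symmetric])
      also have "\<dots> \<le> ennreal (d / 3)"
        using elim u by (intro ennreal_leI) (simp add: pos_less_divide_eq mult.commute less_imp_le)
      finally show "ennreal u * ennreal (measure (P1 n) {z. Zn P1 n z > h}) \<le> ennreal (d / 3)" .
      have "ennreal (u / g + 1) * (\<integral>\<^sup>+z. ennreal (W z) \<partial>P1 n) \<le> ennreal (u / g + 1) * ennreal (1 / (real n * a1 * ln 2))"
        unfolding W_def by (intro mult_left_mono WW_int n) auto
      also have "\<dots> = ennreal (C / real n)"
        using u g by (simp add: C_def ennreal_mult'[symmetric] field_simps)
      also have "\<dots> \<le> ennreal (d / 3)" using elim by (intro ennreal_leI) simp
      finally show "ennreal (u / g + 1) * (\<integral>\<^sup>+z. ennreal (W z) \<partial>P1 n) \<le> ennreal (d / 3)" .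
    qed
    also have "\<dots> = ennreal d" using d by (simp flip: ennreal_plus)
    finally show ?case .
  qed
qed

end


lemma mixsrc_swap: "mixsrc P1 P2 P a1 a2 \<Longrightarrow> mixsrc P2 P1 P a2 a1"
  unfolding mixsrc_def by (auto simp: add.commute)

lemma ennreal_max_eq: "ennreal (max a b) = max (ennreal a) (ennreal b)"
proof (cases "a \<le> b")
  case True
  then have "ennreal a \<le> ennreal b" by (rule ennreal_leI)
  with True show ?thesis by (simp add: max_def)
next
  case False
  then have "ennreal b \<le> ennreal a" by (intro ennreal_leI) auto
  with False show ?thesis by (auto simp: max_def intro: antisym)
qed

lemma FF_upper:
  fixes P1 P2 P :: "('a::countable, 'b::countable) source"
  assumes ms: "mixsrc P1 P2 P a1 a2"
    and ui1: "unif_integrable P1" and ui2: "unif_integrable P2"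
    and hb1: "(\<lambda>n. measure (P1 n) {z. Zn P1 n z > b1}) \<longlonglongrightarrow> 0"
    and hb2: "(\<lambda>n. measure (P2 n) {z. Zn P2 n z > b2}) \<longlonglongrightarrow> 0"
    and e: "0 < e" "e < 1"
  shows "FF P e \<le> ennreal (max b1 b2)"
proof -
  interpret m1: mixsrc P1 P2 P a1 a2 by (rule ms)
  interpret m2: mixsrc P2 P1 P a2 a1 by (rule mixsrc_swap[OF ms])
  define h where "h = max (max b1 b2) 0"
  have h0: "h \<ge> 0" by (simp add: h_def)
  have eh: "ennreal h = ennreal (max b1 b2)" unfolding h_def ennreal_max_eq by simp
  have hb1': "(\<lambda>n. measure (P1 n) {z. Zn P1 n z > h}) \<longlonglongrightarrow> 0"
  proof (rule tendsto_sandwich[OF _ _ tendsto_const hb1])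
    show "\<forall>\<^sub>F n in sequentially. 0 \<le> measure (P1 n) {z. Zn P1 n z > h}" by simp
    show "\<forall>\<^sub>F n in sequentially. measure (P1 n) {z. Zn P1 n z > h} \<le> measure (P1 n) {z. Zn P1 n z > b1}"
      by (intro always_eventually allI measure_pmf.finite_measure_mono) (auto simp: h_def)
  qed
  have hb2': "(\<lambda>n. measure (P2 n) {z. Zn P2 n z > h}) \<longlonglongrightarrow> 0"
  proof (rule tendsto_sandwich[OF _ _ tendsto_const hb2])
    show "\<forall>\<^sub>F n in sequentially. 0 \<le> measure (P2 n) {z. Zn P2 n z > h}" by simp
    show "\<forall>\<^sub>F n in sequentially. measure (P2 n) {z. Zn P2 n z > h} \<le> measure (P2 n) {z. Zn P2 n z > b2}"
      by (intro always_eventually allI measure_pmf.finite_measure_mono) (auto simp: h_def)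
  qed
  have "FF P e \<le> ennreal h"
  proof (rule ennreal_le_epsilon)
    fix d :: real assume d: "0 < d"
    define g where "g = d / 2"
    define del where "del = e * d / 2"
    have g: "g > 0" using d by (simp add: g_def)
    have del: "del > 0" using d e by (simp add: del_def)
    have "FF P e \<le> ennreal (h + d)"
      unfolding FF_def
    proof (rule Limsup_bounded)
      show "\<forall>\<^sub>F n in sequentially. ennreal (1 / real n) * Hs_eps P n e \<le> ennreal (h + d)"
        using m1.comp_vanish[OF ui1 hb1' h0 g del] m2.comp_vanish[OF ui2 hb2' h0 g del]
          eventually_ge_at_top[of "1::nat"]
      proof eventually_elim
        case (elim n)
        have "ennreal (1 / real n) * Hs_eps P n e \<le> ennreal (h + g) + ennreal (1 / e) *
            (\<integral>\<^sup>+z. ennreal (Zn P n z) * indicator {z. Zn P n z > h + g} z \<partial>P n)"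
          using elim h0 g e by (intro Hs_eps_upper_scaled) auto
        also have "(\<integral>\<^sup>+z. ennreal (Zn P n z) * indicator {z. Zn P n z > h + g} z \<partial>P n)
            = ennreal a1 * (\<integral>\<^sup>+z. ennreal (Zn P n z) * indicator {z. Zn P n z > h + g} z \<partial>P1 n)
              + ennreal a2 * (\<integral>\<^sup>+z. ennreal (Zn P n z) * indicator {z. Zn P n z > h + g} z \<partial>P2 n)"
          by (rule mix_nn[OF m1.a1 m1.a2 m1.a12 m1.mixn])
        also have "\<dots> \<le> ennreal a1 * ennreal del + ennreal a2 * ennreal del"
          using elim by (intro add_mono mult_left_mono) auto
        also have "\<dots> = ennreal del"
        proof -
          have "ennreal a1 * ennreal del + ennreal a2 * ennreal del = ennreal (a1 * del) + ennreal (a2 * del)"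
            using m1.a1 m1.a2 by (simp add: ennreal_mult'[symmetric])
          also have "\<dots> = ennreal (a1 * del + a2 * del)"
            using m1.a1 m1.a2 del by (intro ennreal_plus[symmetric]) auto
          also have "a1 * del + a2 * del = del" using m1.a12 by (simp add: distrib_right[symmetric])
          finally show ?thesis .
        qed
        also have "ennreal (h + g) + ennreal (1 / e) * ennreal del = ennreal (h + d)"
        proof -
          have "ennreal (1 / e) * ennreal del = ennreal (1 / e * del)"
            using e by (intro ennreal_mult'[symmetric]) simp
          also have "1 / e * del = d / 2" using e by (simp add: del_def)
          finally have "ennreal (1 / e) * ennreal del = ennreal (d / 2)" .
          moreover have "ennreal (h + g) + ennreal (d / 2) = ennreal (h + g + d / 2)"
            using h0 g d by (intro ennreal_plus[symmetric]) auto
          moreover have "h + g + d / 2 = h + d" by (simp add: g_def)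
          ultimately show ?thesis by simp
        qed
        finally show ?case by (simp add: mult_left_mono)
      qed
    qed
    also have "\<dots> = ennreal h + ennreal d" using h0 d by (simp add: ennreal_plus)
    finally show "FF P e \<le> ennreal h + ennreal d" .
  qed
  then show ?thesis using eh by simp
qed



lemma Hs_upper:
  fixes P1 P2 P :: "('a::countable, 'b::countable) source"
  assumes ms: "mixsrc P1 P2 P a1 a2"
    and ui1: "unif_integrable P1" and ui2: "unif_integrable P2"
  shows "Hs P \<le> max (Hbar P1) (Hbar P2)"
  unfolding Hs_SUP
proof (rule SUP_least)
  fix e :: real assume e: "e \<in> {0<..<1}"
  show "FF P e \<le> max (Hbar P1) (Hbar P2)"
  proof (rule ccontr)
    assume "\<not> FF P e \<le> max (Hbar P1) (Hbar P2)"
    then have "max (Hbar P1) (Hbar P2) < FF P e" by (simp add: not_le)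
    then have l1: "Hbar P1 < FF P e" and l2: "Hbar P2 < FF P e" by (simp_all add: max_less_iff_conj)
    from l1 obtain b1 where b1: "(\<lambda>n. measure (P1 n) {z. Zn P1 n z > b1}) \<longlonglongrightarrow> 0" "ennreal b1 < FF P e"
      unfolding Hbar_def by (auto simp: Inf_less_iff)
    from l2 obtain b2 where b2: "(\<lambda>n. measure (P2 n) {z. Zn P2 n z > b2}) \<longlonglongrightarrow> 0" "ennreal b2 < FF P e"
      unfolding Hbar_def by (auto simp: Inf_less_iff)
    have "FF P e \<le> ennreal (max b1 b2)"
      using e by (intro FF_upper[OF ms ui1 ui2 b1(1) b2(1)]) auto
    also have "\<dots> < FF P e" using b1(2) b2(2) by (simp add: ennreal_max_eq)
    finally show False by simp
  qed
qed

theorem corollary3: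
  fixes P1 P2 P :: "('a::countable, 'b::countable) source"
    and \<alpha>1 \<alpha>2 :: real
  assumes wf1: "src_wf P1" and wf2: "src_wf P2"
    and ui1: "unif_integrable P1" and ui2: "unif_integrable P2"
    and marg: "\<forall>n. map_pmf fst (P1 n) = map_pmf fst (P2 n)"
    and a1: "\<alpha>1 > 0" and a2: "\<alpha>2 > 0" and a12: "\<alpha>1 + \<alpha>2 = 1"
    and mix: "\<forall>n xy. pmf (P n) xy = \<alpha>1 * pmf (P1 n) xy + \<alpha>2 * pmf (P2 n) xy"
    and eq1: "Hs P1 = Hbar P1" and eq2: "Hs P2 = Hbar P2"
  shows "Hs P = max (Hs P1) (Hs P2) \<and> max (Hs P1) (Hs P2) = max (Hbar P1) (Hbar P2)"
proof -
  have ms: "mixsrc P1 P2 P \<alpha>1 \<alpha>2"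
    unfolding mixsrc_def using marg a1 a2 a12 mix by blast
  interpret m1: mixsrc P1 P2 P \<alpha>1 \<alpha>2 by (rule ms)
  interpret m2: mixsrc P2 P1 P \<alpha>2 \<alpha>1 by (rule mixsrc_swap[OF ms])
  have "max (Hs P1) (Hs P2) \<le> Hs P" using m1.Hs_lower m2.Hs_lower by simp
  moreover have "Hs P \<le> max (Hs P1) (Hs P2)"
    using Hs_upper[OF ms ui1 ui2] eq1 eq2 by simp
  ultimately show ?thesis using eq1 eq2 by (simp add: antisym)
qed


end
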